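(* Assume the two standing hypotheses below hold, and let $\alpha\in\mathfrak A$. Let $(u_n,\,n\ge0)$ be a sequence of nonnegative real numbers such that $\sum_{n\ge0}\frac{u_n}{n!}|x|^n<+\infty$ for every $x\in\mathbb R$. Then for every compact $\Lambda\subset E$, $$\mathbb E_{\mu_{\alpha,K_\Lambda,\lambda}}\Big[\frac{u_{|\xi|}}{\det_\alpha J_{\Lambda,\alpha}(\xi)}\Big]<+\infty .$$ As a consequence, $\det_\alpha J_{\Lambda,\alpha}(\xi)$ is $\mu_{\alpha,K_\Lambda,\lambda}$-almost surely positive.
   Context: $E$ is a domain of $\mathbb R^d$ with a Radon measure $\lambda$. Hypothesis 1: $K$ is a bounded, symmetric, Hilbert–Schmidt integral operator on $L^2(E,\lambda)$ with kernel $K(x,y)$, spectrum in $[0,1)$, and $K_\Lambda=P_\Lambda KP_\Lambda$ trace class for every compact $\Lambda$ ($P_\Lambda f=f\mathbf 1_\Lambda$). Hypothesis 2: $\lambda=\rho\,m$ with $m$ the Lebesgue measure, $\rho$ weakly differentiable, and for every compact $\Lambda$, $\int_\Lambda(\|\nabla\rho(x)\|/\rho(x))^2K(x,x)\,\mathrm d\lambda(x)<\infty$. $\mathfrak A=\{2/m':m'\in\mathbb N\}\cup\{-1/m':m'\in\mathbb N\}$. $J_{\Lambda,\alpha}=(I+\alpha K_\Lambda)^{-1}K_\Lambda$ with kernel $J_{\Lambda,\alpha}(x,y)$. For an $n\times n$ matrix $A$, $\det_\alpha A=\sum_{\sigma\in\Sigma_n}\alpha^{n-\nu(\sigma)}\prod_i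 a_{i\sigma(i)}$, $\nu(\sigma)$ the number of cycles of $\sigma$. For a finite configuration $\xi=\{x_1,\dots,x_n\}$, $\det_\alpha J_{\Lambda,\alpha}(\xi)=\det_\alpha(J_{\Lambda,\alpha}(x_i,x_j))_{1\le i,j\le n}$ and $|\xi|=n$. $\mu_{\alpha,K_\Lambda,\lambda}$ is the $\alpha$-determinantal point process on $\Lambda$: the point process whose Janossy densities are $j^n(x_1,\dots,x_n)=\operatorname{Det}(I+\alpha K_\Lambda)^{-1/\alpha}\det_\alpha(J_{\Lambda,\alpha}(x_i,x_j))$, i.e. $\int F\,\mathrm d\mu_{\alpha,K_\Lambda,\lambda}=\sum_{n\ge0}\frac1{n!}\int_{\Lambda^n}F(\{x_1,\dots,x_n\})j^n(x_1,\dots,x_n)\,\mathrm d\lambda(x_1)\cdots\mathrm d\lambda(x_n)$ ($\operatorname{Det}$ the Fredholm determinant); equivalently its Laplace functional is $\operatorname{Det}(I+\alpha K_\Lambda[1-e^{-f}])^{-1/\alpha}$. *)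

theory Defs
  imports "HOL-Analysis.Analysis" "HOL-Combinatorics.Permutations"
begin

definition partial_along :: "'a::euclidean_space \<Rightarrow> ('a \<Rightarrow> real) \<Rightarrow> ('a \<Rightarrow> real)" where
  "partial_along v f = (\<lambda>x. frechet_derivative f (at x) v)"

definition smooth_fun :: "('a::euclidean_space \<Rightarrow> real) \<Rightarrow> bool" where
  "smooth_fun f \<longleftrightarrow> (\<forall>vs :: 'a list. \<forall>x. (foldr partial_along vs f) differentiable (at x))"

definition test_fun :: "'a::euclidean_space set \<Rightarrow> ('a \<Rightarrow> real) \<Rightarrow> bool" where
  "test_fun E f \<longleftrightarrow> smooth_fun f \<and> compact (closure {x. f x \<noteq> 0}) \<and> closure {x. f x \<noteq> 0} \<subseteq> E"

definition loc_integrable :: "'a::euclidean_space set \<Rightarrow> ('a \<Rightarrow> real) \<Rightarrow> bool" where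
  "loc_integrable E f \<longleftrightarrow> (\<forall>C. compact C \<and> C \<subseteq> E \<longrightarrow> set_integrable lborel C f)"

definition weak_gradient :: "'a::euclidean_space set \<Rightarrow> ('a \<Rightarrow> real) \<Rightarrow> ('a \<Rightarrow> 'a) \<Rightarrow> bool" where
  "weak_gradient E rho g \<longleftrightarrow>
     loc_integrable E rho \<and> (\<forall>i\<in>Basis. loc_integrable E (\<lambda>x. g x \<bullet> i)) \<and>
     (\<forall>\<phi>. test_fun E \<phi> \<longrightarrow> (\<forall>i\<in>Basis.
        (\<integral>x. rho x * frechet_derivative \<phi> (at x) i \<partial>lborel) = - (\<integral>x. (g x \<bullet> i) * \<phi> x \<partial>lborel)))"

definition L2 :: "'a measure \<Rightarrow> ('a \<Rightarrow> real) \<Rightarrow> bool" where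
  "L2 M f \<longleftrightarrow> f \<in> borel_measurable M \<and> integrable M (\<lambda>x. (f x)\<^sup>2)"

definition intop :: "'a measure \<Rightarrow> ('a \<Rightarrow> 'a \<Rightarrow> real) \<Rightarrow> ('a \<Rightarrow> real) \<Rightarrow> ('a \<Rightarrow> real)" where
  "intop M K f = (\<lambda>x. \<integral>y. K x y * f y \<partial>M)"

definition hilbert_schmidt_kernel :: "'a measure \<Rightarrow> ('a \<Rightarrow> 'a \<Rightarrow> real) \<Rightarrow> bool" where
  "hilbert_schmidt_kernel M K \<longleftrightarrow>
     (\<lambda>(x,y). K x y) \<in> borel_measurable (M \<Otimes>\<^sub>M M) \<and> integrable (M \<Otimes>\<^sub>M M) (\<lambda>(x,y). (K x y)\<^sup>2)"

definition op_spectrum :: "'a measure \<Rightarrow> (('a \<Rightarrow> real) \<Rightarrow> ('a \<Rightarrow> real)) \<Rightarrow> real set" where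
  "op_spectrum M T = {t. \<not> ((\<forall>f. L2 M f \<longrightarrow> (AE x in M. T f x - t * f x = 0) \<longrightarrow> (AE x in M. f x = 0))
                          \<and> (\<forall>g. L2 M g \<longrightarrow> (\<exists>f. L2 M f \<and> (AE x in M. T f x - t * f x = g x))))}"

definition restr_kernel :: "'a set \<Rightarrow> ('a \<Rightarrow> 'a \<Rightarrow> real) \<Rightarrow> 'a \<Rightarrow> 'a \<Rightarrow> real" where
  "restr_kernel \<Lambda> K x y = indicator \<Lambda> x * K x y * indicator \<Lambda> y"

definition spectral_rep :: "'a measure \<Rightarrow> (('a \<Rightarrow> real) \<Rightarrow> ('a \<Rightarrow> real)) \<Rightarrow> (nat \<Rightarrow> 'a \<Rightarrow> real) \<Rightarrow> (nat \<Rightarrow> real) \<Rightarrow> bool" where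
  "spectral_rep M T \<phi> \<mu> \<longleftrightarrow>
     (\<forall>k. L2 M (\<phi> k)) \<and>
     (\<forall>i j. \<mu> i \<noteq> 0 \<longrightarrow> \<mu> j \<noteq> 0 \<longrightarrow> (\<integral>x. \<phi> i x * \<phi> j x \<partial>M) = (if i = j then 1 else 0)) \<and>
     summable (\<lambda>k. \<bar>\<mu> k\<bar>) \<and>
     (\<forall>f. L2 M f \<longrightarrow> (AE x in M. T f x = (\<Sum>k. \<mu> k * (\<integral>y. f y * \<phi> k y \<partial>M) * \<phi> k x)))"

definition trace_class :: "'a measure \<Rightarrow> (('a \<Rightarrow> real) \<Rightarrow> ('a \<Rightarrow> real)) \<Rightarrow> bool" where
  "trace_class M T \<longleftrightarrow> (\<exists>\<phi> \<mu>. spectral_rep M T \<phi> \<mu>)"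

definition some_rep :: "'a measure \<Rightarrow> (('a \<Rightarrow> real) \<Rightarrow> ('a \<Rightarrow> real)) \<Rightarrow> (nat \<Rightarrow> 'a \<Rightarrow> real) \<times> (nat \<Rightarrow> real)" where
  "some_rep M T = (SOME p. spectral_rep M T (fst p) (snd p))"

definition fredholm_det :: "'a measure \<Rightarrow> (('a \<Rightarrow> real) \<Rightarrow> ('a \<Rightarrow> real)) \<Rightarrow> real \<Rightarrow> real" where
  "fredholm_det M T \<alpha> = (\<Prod>k. 1 + \<alpha> * snd (some_rep M T) k)"

text \<open>Kernel of (I + alpha T)^{-1} T, in its canonical eigen-expansion version.\<close>
definition resolvent_kernel :: "'a measure \<Rightarrow> (('a \<Rightarrow> real) \<Rightarrow> ('a \<Rightarrow> real)) \<Rightarrow> real \<Rightarrow> 'a \<Rightarrow> 'a \<Rightarrow> real" where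
  "resolvent_kernel M T \<alpha> x y =
     (let \<phi> = fst (some_rep M T); \<mu> = snd (some_rep M T)
      in (\<Sum>k. \<mu> k / (1 + \<alpha> * \<mu> k) * \<phi> k x * \<phi> k y))"

definition num_cycles :: "nat \<Rightarrow> (nat \<Rightarrow> nat) \<Rightarrow> nat" where
  "num_cycles n \<sigma> = card ((\<lambda>i. {j. \<exists>k. (\<sigma> ^^ k) i = j}) ` {..<n})"

definition alpha_det :: "real \<Rightarrow> nat \<Rightarrow> (nat \<Rightarrow> nat \<Rightarrow> real) \<Rightarrow> real" where
  "alpha_det \<alpha> n A = (\<Sum>\<sigma> | \<sigma> permutes {..<n}. \<alpha> ^ (n - num_cycles n \<sigma>) * (\<Prod>i<n. A i (\<sigma> i)))"

definition alpha_set :: "real set" where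
  "alpha_set = {2 / real m | m. m \<ge> 1} \<union> {- 1 / real m | m. m \<ge> 1}"

text \<open>A finite configuration {x_0,...,x_(n-1)} is represented by the pair (n, x) with
  x in the n-fold product of Lambda (labelled configurations, weighted by 1/n!).\<close>

definition conf_factor :: "'a measure \<Rightarrow> 'a set \<Rightarrow> nat \<Rightarrow> (nat \<Rightarrow> 'a) measure" where
  "conf_factor M \<Lambda> n = PiM {..<n} (\<lambda>_. restrict_space M \<Lambda>)"

definition conf_space :: "'a measure \<Rightarrow> 'a set \<Rightarrow> (nat \<times> (nat \<Rightarrow> 'a)) set" where
  "conf_space M \<Lambda> = Sigma UNIV (\<lambda>n. space (conf_factor M \<Lambda> n))"

definition conf_sets :: "'a measure \<Rightarrow> 'a set \<Rightarrow> (nat \<times> (nat \<Rightarrow> 'a)) set set" where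
  "conf_sets M \<Lambda> = {A. A \<subseteq> conf_space M \<Lambda> \<and>
      (\<forall>n. Pair n -` A \<inter> space (conf_factor M \<Lambda> n) \<in> sets (conf_factor M \<Lambda> n))}"

definition detJ :: "real \<Rightarrow> 'a measure \<Rightarrow> ('a \<Rightarrow> 'a \<Rightarrow> real) \<Rightarrow> 'a set \<Rightarrow> nat \<times> (nat \<Rightarrow> 'a) \<Rightarrow> real" where
  "detJ \<alpha> M K \<Lambda> \<xi> = alpha_det \<alpha> (fst \<xi>)
     (\<lambda>i j. resolvent_kernel M (intop M (restr_kernel \<Lambda> K)) \<alpha> (snd \<xi> i) (snd \<xi> j))"

definition janossy :: "real \<Rightarrow> 'a measure \<Rightarrow> ('a \<Rightarrow> 'a \<Rightarrow> real) \<Rightarrow> 'a set \<Rightarrow> nat \<times> (nat \<Rightarrow> 'a) \<Rightarrow> real" where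
  "janossy \<alpha> M K \<Lambda> \<xi> =
     fredholm_det M (intop M (restr_kernel \<Lambda> K)) \<alpha> powr (-1 / \<alpha>) * detJ \<alpha> M K \<Lambda> \<xi>"

definition alpha_dpp :: "real \<Rightarrow> ('a \<Rightarrow> 'a \<Rightarrow> real) \<Rightarrow> 'a set \<Rightarrow> 'a measure \<Rightarrow> (nat \<times> (nat \<Rightarrow> 'a)) measure" where
  "alpha_dpp \<alpha> K \<Lambda> M = measure_of (conf_space M \<Lambda>) (conf_sets M \<Lambda>)
     (\<lambda>A. \<Sum>n. ennreal (1 / fact n) *
        (\<integral>\<^sup>+ x. ennreal (janossy \<alpha> M K \<Lambda> (n, x)) * indicator A (n, x) \<partial>conf_factor M \<Lambda> n))"

end

theory Submission
  imports Defs
begin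


lemma conf_sets_Pow: "conf_sets M \<Lambda> \<subseteq> Pow (conf_space M \<Lambda>)"
  by (auto simp: conf_sets_def)

lemma conf_space_iff: "(n, y) \<in> conf_space M \<Lambda> \<longleftrightarrow> y \<in> space (conf_factor M \<Lambda> n)"
  by (auto simp: conf_space_def)

lemma meas_to:
  assumes "\<And>n. (\<lambda>x. h (n, x)) \<in> measurable (conf_factor M \<Lambda> n) N"
  shows "h \<in> measurable (measure_of (conf_space M \<Lambda>) (conf_sets M \<Lambda>) \<mu>) N"
proof (rule measurableI)
  fix x assume "x \<in> space (measure_of (conf_space M \<Lambda>) (conf_sets M \<Lambda>) \<mu>)"
  then obtain n y where x: "x = (n, y)" and y: "y \<in> space (conf_factor M \<Lambda> n)"
    by (cases x) (auto simp: space_measure_of_conv conf_space_iff)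
  show "h x \<in> space N" using measurable_space[OF assms[of n] y] x by simp
next
  fix B assume B: "B \<in> sets N"
  have "h -` B \<inter> conf_space M \<Lambda> \<in> conf_sets M \<Lambda>"
    unfolding conf_sets_def
  proof (intro CollectI conjI allI)
    fix n
    have "Pair n -` (h -` B \<inter> conf_space M \<Lambda>) \<inter> space (conf_factor M \<Lambda> n)
        = (\<lambda>x. h (n, x)) -` B \<inter> space (conf_factor M \<Lambda> n)"
      by (auto simp: conf_space_iff)
    then show "Pair n -` (h -` B \<inter> conf_space M \<Lambda>) \<inter> space (conf_factor M \<Lambda> n) \<in> sets (conf_factor M \<Lambda> n)"
      using measurable_sets[OF assms[of n] B] by simp
  qed auto
  then show "h -` B \<inter> space (measure_of (conf_space M \<Lambda>) (conf_sets M \<Lambda>) \<mu>) \<in> sets (measure_of (conf_space M \<Lambda>) (conf_sets M \<Lambda>) \<mu>)"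
    by (simp add: space_measure_of_conv sets_measure_of_conv conf_sets_Pow sigma_sets.Basic)
qed

lemma Pair_meas: "Pair n \<in> measurable (conf_factor M \<Lambda> n) (measure_of (conf_space M \<Lambda>) (conf_sets M \<Lambda>) \<mu>)"
proof (rule measurable_measure_of[OF conf_sets_Pow])
  show "Pair n \<in> space (conf_factor M \<Lambda> n) \<rightarrow> conf_space M \<Lambda>" by (auto simp: conf_space_iff)
  fix y assume "y \<in> conf_sets M \<Lambda>"
  then show "Pair n -` y \<inter> space (conf_factor M \<Lambda> n) \<in> sets (conf_factor M \<Lambda> n)"
    by (auto simp: conf_sets_def)
qed

lemma meas_from:
  assumes "g \<in> measurable (measure_of (conf_space M \<Lambda>) (conf_sets M \<Lambda>) \<mu>) N"
  shows "(\<lambda>x. g (n, x)) \<in> measurable (conf_factor M \<Lambda> n) N"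
  using measurable_compose[OF Pair_meas assms] by (simp add: o_def)



definition dmu :: "'a measure \<Rightarrow> 'a set \<Rightarrow> (nat \<times> (nat \<Rightarrow> 'a) \<Rightarrow> real) \<Rightarrow> (nat \<times> (nat \<Rightarrow> 'a)) set \<Rightarrow> ennreal" where
  "dmu M \<Lambda> J = (\<lambda>A. \<Sum>n. ennreal (1 / fact n) *
        (\<integral>\<^sup>+ x. ennreal (J (n, x)) * indicator A (n, x) \<partial>conf_factor M \<Lambda> n))"

lemma nn_formula:
  fixes J :: "nat \<times> (nat \<Rightarrow> 'a) \<Rightarrow> real" and M :: "'a measure" and \<Lambda> :: "'a set"
  defines "N \<equiv> measure_of (conf_space M \<Lambda>) (conf_sets M \<Lambda>) (dmu M \<Lambda> J)"
  assumes ms: "measure_space (conf_space M \<Lambda>) (sigma_sets (conf_space M \<Lambda>) (conf_sets M \<Lambda>)) (dmu M \<Lambda> J)"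
  assumes Jm: "\<And>n. (\<lambda>x. J (n, x)) \<in> borel_measurable (conf_factor M \<Lambda> n)"
  assumes g: "g \<in> borel_measurable N"
  shows "(\<integral>\<^sup>+ \<xi>. g \<xi> \<partial>N) = (\<Sum>n. ennreal (1 / fact n) *
        (\<integral>\<^sup>+ x. ennreal (J (n, x)) * g (n, x) \<partial>conf_factor M \<Lambda> n))"
  using g
proof -
  have Jme: "(\<lambda>x. ennreal (J (n, x))) \<in> borel_measurable (conf_factor M \<Lambda> n)" for n
    using measurable_compose[OF Jm measurable_ennreal] by (simp add: o_def)
  from g show ?thesis
proof (induction g rule: borel_measurable_induct)
  case (cong f g)
  have "(\<integral>\<^sup>+ x. ennreal (J (n, x)) * f (n, x) \<partial>conf_factor M \<Lambda> n)
     = (\<integral>\<^sup>+ x. ennreal (J (n, x)) * g (n, x) \<partial>conf_factor M \<Lambda> n)" for n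
    by (intro nn_integral_cong) (simp add: cong.hyps(3) N_def space_measure_of_conv conf_space_iff)
  moreover have "(\<integral>\<^sup>+ \<xi>. f \<xi> \<partial>N) = (\<integral>\<^sup>+ \<xi>. g \<xi> \<partial>N)"
    by (intro nn_integral_cong) (simp add: cong.hyps(3))
  ultimately show ?case using cong.IH by simp
next
  case (set A)
  then have A: "A \<in> sigma_sets (conf_space M \<Lambda>) (conf_sets M \<Lambda>)"
    by (simp add: N_def sets_measure_of_conv conf_sets_Pow)
  have "(\<integral>\<^sup>+ \<xi>. indicator A \<xi> \<partial>N) = emeasure N A" using set by simp
  also have "\<dots> = dmu M \<Lambda> J A"
    using A ms by (simp add: N_def emeasure_measure_of_conv)
  finally show ?case by (simp add: dmu_def)
next
  case (mult u c)
  have um: "(\<lambda>x. u (n, x)) \<in> borel_measurable (conf_factor M \<Lambda> n)" for n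
    using meas_from[OF mult.hyps(2)[unfolded N_def]] .
  have "(\<integral>\<^sup>+ \<xi>. c * u \<xi> \<partial>N) = c * (\<integral>\<^sup>+ \<xi>. u \<xi> \<partial>N)"
    using mult.hyps(2) by (rule nn_integral_cmult)
  also have "\<dots> = c * (\<Sum>n. ennreal (1 / fact n) *
        (\<integral>\<^sup>+ x. ennreal (J (n, x)) * u (n, x) \<partial>conf_factor M \<Lambda> n))" using mult.IH by simp
  also have "\<dots> = (\<Sum>n. c * (ennreal (1 / fact n) *
        (\<integral>\<^sup>+ x. ennreal (J (n, x)) * u (n, x) \<partial>conf_factor M \<Lambda> n)))"
    by (rule ennreal_suminf_cmult[symmetric])
  also have "\<dots> = (\<Sum>n. ennreal (1 / fact n) *
        (\<integral>\<^sup>+ x. ennreal (J (n, x)) * (c * u (n, x)) \<partial>conf_factor M \<Lambda> n))"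
  proof (intro suminf_cong)
    fix n
    have "(\<integral>\<^sup>+ x. ennreal (J (n, x)) * (c * u (n, x)) \<partial>conf_factor M \<Lambda> n)
       = (\<integral>\<^sup>+ x. c * (ennreal (J (n, x)) * u (n, x)) \<partial>conf_factor M \<Lambda> n)"
      by (simp add: ac_simps)
    also have "\<dots> = c * (\<integral>\<^sup>+ x. ennreal (J (n, x)) * u (n, x) \<partial>conf_factor M \<Lambda> n)"
      by (intro nn_integral_cmult borel_measurable_times_ennreal Jme um)
    finally show "c * (ennreal (1 / fact n) *
        (\<integral>\<^sup>+ x. ennreal (J (n, x)) * u (n, x) \<partial>conf_factor M \<Lambda> n)) = ennreal (1 / fact n) *
        (\<integral>\<^sup>+ x. ennreal (J (n, x)) * (c * u (n, x)) \<partial>conf_factor M \<Lambda> n)"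
      by (simp add: ac_simps)
  qed
  finally show ?case .
next
  case (add u v)
  have um: "(\<lambda>x. u (n, x)) \<in> borel_measurable (conf_factor M \<Lambda> n)" for n
    using meas_from[OF add.hyps(1)[unfolded N_def]] .
  have vm: "(\<lambda>x. v (n, x)) \<in> borel_measurable (conf_factor M \<Lambda> n)" for n
    using meas_from[OF add.hyps(3)[unfolded N_def]] .
  have "(\<integral>\<^sup>+ \<xi>. v \<xi> + u \<xi> \<partial>N) = (\<integral>\<^sup>+ \<xi>. v \<xi> \<partial>N) + (\<integral>\<^sup>+ \<xi>. u \<xi> \<partial>N)"
    using add.hyps by (intro nn_integral_add) auto
  also have "\<dots> = (\<Sum>n. ennreal (1 / fact n) *
        (\<integral>\<^sup>+ x. ennreal (J (n, x)) * v (n, x) \<partial>conf_factor M \<Lambda> n)) + (\<Sum>n. ennreal (1 / fact n) *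
        (\<integral>\<^sup>+ x. ennreal (J (n, x)) * u (n, x) \<partial>conf_factor M \<Lambda> n))"
    using add.IH by simp
  also have "\<dots> = (\<Sum>n. ennreal (1 / fact n) *
        (\<integral>\<^sup>+ x. ennreal (J (n, x)) * v (n, x) \<partial>conf_factor M \<Lambda> n) + ennreal (1 / fact n) *
        (\<integral>\<^sup>+ x. ennreal (J (n, x)) * u (n, x) \<partial>conf_factor M \<Lambda> n))"
    by (rule suminf_add) (auto intro: summableI)
  also have "\<dots> = (\<Sum>n. ennreal (1 / fact n) *
        (\<integral>\<^sup>+ x. ennreal (J (n, x)) * (v (n, x) + u (n, x)) \<partial>conf_factor M \<Lambda> n))"
  proof (intro suminf_cong)
    fix n
    have "(\<integral>\<^sup>+ x. ennreal (J (n, x)) * (v (n, x) + u (n, x)) \<partial>conf_factor M \<Lambda> n)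
       = (\<integral>\<^sup>+ x. ennreal (J (n, x)) * v (n, x) + ennreal (J (n, x)) * u (n, x) \<partial>conf_factor M \<Lambda> n)"
      by (simp add: distrib_left)
    also have "\<dots> = (\<integral>\<^sup>+ x. ennreal (J (n, x)) * v (n, x) \<partial>conf_factor M \<Lambda> n) +
         (\<integral>\<^sup>+ x. ennreal (J (n, x)) * u (n, x) \<partial>conf_factor M \<Lambda> n)"
      by (intro nn_integral_add borel_measurable_times_ennreal Jme vm um)
    finally show "ennreal (1 / fact n) *
        (\<integral>\<^sup>+ x. ennreal (J (n, x)) * v (n, x) \<partial>conf_factor M \<Lambda> n) + ennreal (1 / fact n) *
        (\<integral>\<^sup>+ x. ennreal (J (n, x)) * u (n, x) \<partial>conf_factor M \<Lambda> n) = ennreal (1 / fact n) *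
        (\<integral>\<^sup>+ x. ennreal (J (n, x)) * (v (n, x) + u (n, x)) \<partial>conf_factor M \<Lambda> n)"
      by (simp add: distrib_left)
  qed
  finally show ?case .
next
  case (seq U)
  have Um: "(\<lambda>x. U i (n, x)) \<in> borel_measurable (conf_factor M \<Lambda> n)" for n i
    using meas_from[OF seq.hyps(1)[unfolded N_def]] .
  have "(\<integral>\<^sup>+ \<xi>. (SUP i. U i) \<xi> \<partial>N) = (\<integral>\<^sup>+ \<xi>. (SUP i. U i \<xi>) \<partial>N)" by (simp add: SUP_apply[symmetric])
  also have "\<dots> = (SUP i. \<integral>\<^sup>+ \<xi>. U i \<xi> \<partial>N)"
    using seq.hyps by (intro nn_integral_monotone_convergence_SUP) auto
  also have "\<dots> = (SUP i. \<Sum>n. ennreal (1 / fact n) *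
        (\<integral>\<^sup>+ x. ennreal (J (n, x)) * U i (n, x) \<partial>conf_factor M \<Lambda> n))"
    using seq.IH by simp
  also have "\<dots> = (\<Sum>n. SUP i. ennreal (1 / fact n) *
        (\<integral>\<^sup>+ x. ennreal (J (n, x)) * U i (n, x) \<partial>conf_factor M \<Lambda> n))"
  proof (rule ennreal_suminf_SUP_eq[symmetric])
    fix n
    show "incseq (\<lambda>i. ennreal (1 / fact n) *
        (\<integral>\<^sup>+ x. ennreal (J (n, x)) * U i (n, x) \<partial>conf_factor M \<Lambda> n))"
      using seq.hyps(3) unfolding incseq_def
      by (auto intro!: mult_left_mono nn_integral_mono simp: le_fun_def)
  qed
  also have "\<dots> = (\<Sum>n. ennreal (1 / fact n) *
        (\<integral>\<^sup>+ x. ennreal (J (n, x)) * (SUP i. U i) (n, x) \<partial>conf_factor M \<Lambda> n))"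
  proof (intro suminf_cong)
    fix n
    have "(\<integral>\<^sup>+ x. ennreal (J (n, x)) * (SUP i. U i) (n, x) \<partial>conf_factor M \<Lambda> n)
       = (\<integral>\<^sup>+ x. (SUP i. ennreal (J (n, x)) * U i (n, x)) \<partial>conf_factor M \<Lambda> n)"
      by (simp add: SUP_mult_left_ennreal image_comp)
    also have "\<dots> = (SUP i. \<integral>\<^sup>+ x. ennreal (J (n, x)) * U i (n, x) \<partial>conf_factor M \<Lambda> n)"
    proof (rule nn_integral_monotone_convergence_SUP)
      show "incseq (\<lambda>i x. ennreal (J (n, x)) * U i (n, x))"
        using seq.hyps(3) unfolding incseq_def
        by (auto intro!: mult_left_mono simp: le_fun_def)
      show "\<And>i. (\<lambda>x. ennreal (J (n, x)) * U i (n, x)) \<in> borel_measurable (conf_factor M \<Lambda> n)"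
        by (intro borel_measurable_times_ennreal Jme Um)
    qed
    finally show "(SUP i. ennreal (1 / fact n) *
        (\<integral>\<^sup>+ x. ennreal (J (n, x)) * U i (n, x) \<partial>conf_factor M \<Lambda> n)) = ennreal (1 / fact n) *
        (\<integral>\<^sup>+ x. ennreal (J (n, x)) * (SUP i. U i) (n, x) \<partial>conf_factor M \<Lambda> n)"
      by (simp add: SUP_mult_left_ennreal)
  qed
  finally show ?case .
qed
qed



lemma comp_meas:
  assumes "f \<in> borel_measurable M" "i < n"
  shows "(\<lambda>x. f (x i)) \<in> borel_measurable (conf_factor M \<Lambda> n)"
  unfolding conf_factor_def
  using measurable_compose[OF measurable_component_singleton[of i "{..<n}" "\<lambda>_. restrict_space M \<Lambda>"]
       measurable_restrict_space1[OF assms(1)]] assms(2)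
  by (simp add: o_def)

lemma detJ_meas:
  assumes phi: "\<And>k. fst (some_rep M (intop M (restr_kernel \<Lambda> K))) k \<in> borel_measurable M"
  shows "(\<lambda>x. detJ \<alpha> M K \<Lambda> (n, x)) \<in> borel_measurable (conf_factor M \<Lambda> n)"
proof -
  define \<phi> where "\<phi> = fst (some_rep M (intop M (restr_kernel \<Lambda> K)))"
  define \<mu> where "\<mu> = snd (some_rep M (intop M (restr_kernel \<Lambda> K)))"
  have R: "(\<lambda>x. resolvent_kernel M (intop M (restr_kernel \<Lambda> K)) \<alpha> (x i) (x j))
      \<in> borel_measurable (conf_factor M \<Lambda> n)" if "i < n" "j < n" for i j
    unfolding resolvent_kernel_def Let_def \<phi>_def[symmetric] \<mu>_def[symmetric]
    apply (intro borel_measurable_suminf borel_measurable_times borel_measurable_const)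
    using comp_meas[OF phi[folded \<phi>_def] that(1)] comp_meas[OF phi[folded \<phi>_def] that(2)] by auto
  show ?thesis
    unfolding detJ_def alpha_det_def fst_conv snd_conv
  proof (intro borel_measurable_sum borel_measurable_times borel_measurable_const borel_measurable_prod)
    fix \<sigma> i assume "\<sigma> \<in> {\<sigma>. \<sigma> permutes {..<n}}" "i \<in> {..<n}"
    then have "i < n" "\<sigma> i < n" using permutes_in_image[of \<sigma> "{..<n}" i] by auto
    then show "(\<lambda>x. resolvent_kernel M (intop M (restr_kernel \<Lambda> K)) \<alpha> (x i) (x (\<sigma> i)))
      \<in> borel_measurable (conf_factor M \<Lambda> n)" by (rule R)
  qed
qed



lemma lam_fin:
  fixes rho :: "'a::euclidean_space \<Rightarrow> real"
  assumes lam: "lam = density lborel (\<lambda>x. ennreal (indicator E x * rho x))"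
    and si: "set_integrable lborel \<Lambda> rho"
  shows "emeasure lam \<Lambda> < \<infinity>"
proof -
  have "emeasure lam \<Lambda> \<le> (\<integral>\<^sup>+ x. ennreal (indicator E x * rho x) * indicator \<Lambda> x \<partial>lborel)"
    unfolding lam density_def emeasure_measure_of_conv by auto
  also have "\<dots> \<le> (\<integral>\<^sup>+ x. ennreal (norm (indicator \<Lambda> x *\<^sub>R rho x)) \<partial>lborel)"
    by (intro nn_integral_mono) (auto simp: indicator_def)
  also have "\<dots> < \<infinity>"
    using si unfolding set_integrable_def integrable_iff_bounded by auto
  finally show ?thesis .
qed

lemma CF_space:
  assumes fin: "emeasure lam \<Lambda> < \<infinity>" and L: "\<Lambda> \<in> sets lam"
  shows "emeasure (conf_factor lam \<Lambda> n) (space (conf_factor lam \<Lambda> n)) = emeasure lam \<Lambda> ^ n"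
proof -
  have LL: "\<Lambda> \<inter> space lam = \<Lambda>" using sets.sets_into_space[OF L] by auto
  have sp: "space (restrict_space lam \<Lambda>) = \<Lambda>" using LL by (simp add: space_restrict_space)
  have e: "emeasure (restrict_space lam \<Lambda>) \<Lambda> = emeasure lam \<Lambda>"
    using L LL by (intro emeasure_restrict_space) auto
  have fm: "finite_measure (restrict_space lam \<Lambda>)"
    using fin e sp by (intro finite_measureI) auto
  interpret product_sigma_finite "\<lambda>_::nat. restrict_space lam \<Lambda>"
    by (rule product_sigma_finite.intro) (use fm in \<open>simp add: finite_measure_def\<close>)
  have "emeasure (conf_factor lam \<Lambda> n) (space (conf_factor lam \<Lambda> n))
      = emeasure (PiM {..<n} (\<lambda>_. restrict_space lam \<Lambda>)) (PiE {..<n} (\<lambda>_. \<Lambda>))"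
    by (simp add: conf_factor_def space_PiM sp)
  also have "\<dots> = (\<Prod>i\<in>{..<n}. emeasure (restrict_space lam \<Lambda>) \<Lambda>)"
    using sp sets.top[of "restrict_space lam \<Lambda>"] by (intro emeasure_PiM) auto
  finally show ?thesis using e by simp
qed



theorem mainTheorem6:
  fixes E :: "'a::euclidean_space set"
    and rho :: "'a \<Rightarrow> real"
    and lam :: "'a measure"
    and K :: "'a \<Rightarrow> 'a \<Rightarrow> real"
    and \<alpha> :: real
    and u :: "nat \<Rightarrow> real"
  assumes E_domain: "open E" "connected E"
    \<comment> \<open>Hypothesis 2: lambda = rho m, rho weakly differentiable, integrability condition\<close>
    and lam_def: "lam = density lborel (\<lambda>x. ennreal (indicator E x * rho x))"
    and rho_nonneg: "AE x in lborel. x \<in> E \<longrightarrow> rho x \<ge> 0"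
    and hyp2: "\<exists>g. weak_gradient E rho g \<and>
                 (\<forall>\<Lambda>. compact \<Lambda> \<and> \<Lambda> \<subseteq> E \<longrightarrow>
                    set_integrable lam \<Lambda> (\<lambda>x. (norm (g x) / rho x)\<^sup>2 * K x x))"
    \<comment> \<open>Hypothesis 1\<close>
    and K_HS: "hilbert_schmidt_kernel lam K"
    and K_sym: "\<forall>x\<in>E. \<forall>y\<in>E. K x y = K y x"
    and K_spec: "op_spectrum lam (intop lam K) \<subseteq> {0..<1}"
    and K_tr: "\<forall>\<Lambda>. compact \<Lambda> \<and> \<Lambda> \<subseteq> E \<longrightarrow> trace_class lam (intop lam (restr_kernel \<Lambda> K))"
    and alpha: "\<alpha> \<in> alpha_set"
    and u_nonneg: "\<forall>n. u n \<ge> 0"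
    and u_summ: "\<forall>x::real. summable (\<lambda>n. u n / fact n * \<bar>x\<bar> ^ n)"
  shows "\<forall>\<Lambda>. compact \<Lambda> \<and> \<Lambda> \<subseteq> E \<longrightarrow>
           integrable (alpha_dpp \<alpha> K \<Lambda> lam) (\<lambda>\<xi>. u (fst \<xi>) / detJ \<alpha> lam K \<Lambda> \<xi>)
         \<and> (AE \<xi> in alpha_dpp \<alpha> K \<Lambda> lam. detJ \<alpha> lam K \<Lambda> \<xi> > 0)"
proof (intro allI impI)
  fix \<Lambda> assume L: "compact \<Lambda> \<and> \<Lambda> \<subseteq> E"
  define T where "T = intop lam (restr_kernel \<Lambda> K)"
  define J where "J = janossy \<alpha> lam K \<Lambda>"
  define D where "D = detJ \<alpha> lam K \<Lambda>"
  define c where "c = fredholm_det lam T \<alpha> powr (-1 / \<alpha>)"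
  define N where "N = alpha_dpp \<alpha> K \<Lambda> lam"
  define f where "f = (\<lambda>\<xi>. u (fst \<xi>) / D \<xi>)"
  have c0: "c \<ge> 0" by (simp add: c_def)
  have JD: "J \<xi> = c * D \<xi>" for \<xi> by (simp add: J_def D_def c_def janossy_def T_def)
  have N_eq: "N = measure_of (conf_space lam \<Lambda>) (conf_sets lam \<Lambda>) (dmu lam \<Lambda> J)"
    by (simp add: N_def alpha_dpp_def dmu_def J_def)
  have "trace_class lam T" using K_tr L by (simp add: T_def)
  then have "\<exists>p. spectral_rep lam T (fst p) (snd p)" by (auto simp: trace_class_def)
  then have sr: "spectral_rep lam T (fst (some_rep lam T)) (snd (some_rep lam T))"
    unfolding some_rep_def by (rule someI_ex)
  have phi: "fst (some_rep lam T) k \<in> borel_measurable lam" for k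
    using sr by (auto simp: spectral_rep_def L2_def)
  have Dm: "(\<lambda>x. D (n, x)) \<in> borel_measurable (conf_factor lam \<Lambda> n)" for n
    unfolding D_def by (rule detJ_meas) (use phi in \<open>simp add: T_def\<close>)
  have Jm: "(\<lambda>x. J (n, x)) \<in> borel_measurable (conf_factor lam \<Lambda> n)" for n
    unfolding JD by (intro borel_measurable_times borel_measurable_const Dm)
  have fm: "f \<in> borel_measurable N"
    unfolding N_eq f_def
    by (rule meas_to) (auto intro!: borel_measurable_divide Dm)
  have Dm': "D \<in> borel_measurable N"
    unfolding N_eq by (rule meas_to) (rule Dm)
  have main: "integrable N f \<and> (AE \<xi> in N. D \<xi> > 0)"
  proof (cases "measure_space (conf_space lam \<Lambda>) (sigma_sets (conf_space lam \<Lambda>) (conf_sets lam \<Lambda>)) (dmu lam \<Lambda> J)")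
    case False
    have "emeasure N (space N) = 0"
      unfolding N_eq emeasure_measure_of_conv using False by simp
    then have AEall: "AE x in N. P x" for P
      by (intro AE_I'[of "space N"]) auto
    have "(\<integral>\<^sup>+ x. ennreal (norm (f x)) \<partial>N) = (\<integral>\<^sup>+ x. 0 \<partial>N)"
      by (intro nn_integral_cong_AE AEall)
    then have "integrable N f" using fm by (intro integrableI_bounded) auto
    then show "integrable N f \<and> (AE \<xi> in N. D \<xi> > 0)"
      using AEall by simp
  next
    case True
    note form = nn_formula[OF True Jm, folded N_eq]
    have si: "set_integrable lborel \<Lambda> rho"
      using hyp2 L by (auto simp: weak_gradient_def loc_integrable_def)
    have Lsets: "\<Lambda> \<in> sets lam"
      using L by (simp add: lam_def compact_imp_closed borel_closed)
    have fin: "emeasure lam \<Lambda> < \<infinity>" by (rule lam_fin[OF lam_def si])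
    define l where "l = measure lam \<Lambda>"
    have l0: "l \<ge> 0" by (simp add: l_def)
    have el: "emeasure lam \<Lambda> = ennreal l"
      using fin by (simp add: l_def emeasure_eq_ennreal_measure)
    have sp: "emeasure (conf_factor lam \<Lambda> n) (space (conf_factor lam \<Lambda> n)) = ennreal (l ^ n)" for n
      using CF_space[OF fin Lsets] el l0 by (simp add: ennreal_power)
    have "(\<integral>\<^sup>+ x. ennreal (norm (f x)) \<partial>N)
       = (\<Sum>n. ennreal (1 / fact n) *
        (\<integral>\<^sup>+ x. ennreal (J (n, x)) * ennreal (norm (f (n, x))) \<partial>conf_factor lam \<Lambda> n))"
      by (rule form) (use fm in measurable)
    also have "\<dots> \<le> (\<Sum>n. ennreal (1 / fact n) *
        (\<integral>\<^sup>+ x. ennreal (c * u n) \<partial>conf_factor lam \<Lambda> n))"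
    proof (intro suminf_le mult_left_mono nn_integral_mono)
      fix n x
      show "ennreal (J (n, x)) * ennreal (norm (f (n, x))) \<le> ennreal (c * u n)"
      proof (cases "D (n, x) > 0")
        case True
        have "ennreal (J (n, x)) * ennreal (norm (f (n, x))) = ennreal (J (n, x) * norm (f (n, x)))"
          by (simp add: ennreal_mult'')
        also have "J (n, x) * norm (f (n, x)) = c * u n"
          using True u_nonneg by (simp add: JD f_def)
        finally show ?thesis by simp
      next
        case False
        then have "J (n, x) \<le> 0" using c0 by (simp add: JD mult_nonneg_nonpos)
        then show ?thesis by (simp add: ennreal_neg)
      qed
    qed auto
    also have "\<dots> = (\<Sum>n. ennreal (c * (u n / fact n * \<bar>l\<bar> ^ n)))"
    proof (intro suminf_cong)
      fix n
      show "ennreal (1 / fact n) * (\<integral>\<^sup>+ x. ennreal (c * u n) \<partial>conf_factor lam \<Lambda> n)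
          = ennreal (c * (u n / fact n * \<bar>l\<bar> ^ n))"
        using sp[of n] c0 u_nonneg l0 by (simp add: ennreal_mult[symmetric] field_simps)
    qed
    also have "\<dots> = ennreal (\<Sum>n. c * (u n / fact n * \<bar>l\<bar> ^ n))"
      using c0 u_nonneg u_summ
      by (intro suminf_ennreal2 summable_mult) auto
    also have "\<dots> < \<infinity>" by simp
    finally have "integrable N f" using fm by (intro integrableI_bounded)
    moreover have "AE \<xi> in N. D \<xi> > 0"
    proof (rule AE_I')
      define Z where "Z = D -` {..0} \<inter> space N"
      have Zs: "Z \<in> sets N" unfolding Z_def using Dm' by measurable
      have "emeasure N Z = (\<integral>\<^sup>+ \<xi>. indicator Z \<xi> \<partial>N)" using Zs by simp
      also have "\<dots> = (\<Sum>n. ennreal (1 / fact n) *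
        (\<integral>\<^sup>+ x. ennreal (J (n, x)) * indicator Z (n, x) \<partial>conf_factor lam \<Lambda> n))"
        by (rule form) (use Zs in simp)
      also have "\<dots> = (\<Sum>n. ennreal (1 / fact n) * (\<integral>\<^sup>+ x. 0 \<partial>conf_factor lam \<Lambda> n))"
      proof (intro suminf_cong arg_cong2[where f="(*)"] refl nn_integral_cong)
        fix n x
        show "ennreal (J (n, x)) * indicator Z (n, x) = 0"
        proof (cases "(n, x) \<in> Z")
          case True
          then have "D (n, x) \<le> 0" by (simp add: Z_def)
          then have "J (n, x) \<le> 0" using c0 by (simp add: JD mult_nonneg_nonpos)
          then show ?thesis by (simp add: ennreal_neg)
        qed simp
      qed
      also have "\<dots> = 0" by simp
      finally show "Z \<in> null_sets N" using Zs by auto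
      show "{x \<in> space N. \<not> 0 < D x} \<subseteq> Z" by (auto simp: Z_def)
    qed
    ultimately show "integrable N f \<and> (AE \<xi> in N. D \<xi> > 0)"
      by simp
  qed
  then show "integrable (alpha_dpp \<alpha> K \<Lambda> lam) (\<lambda>\<xi>. u (fst \<xi>) / detJ \<alpha> lam K \<Lambda> \<xi>) \<and>
        (AE \<xi> in alpha_dpp \<alpha> K \<Lambda> lam. detJ \<alpha> lam K \<Lambda> \<xi> > 0)"
    unfolding N_def D_def f_def .
qed


end
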